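(* Let $f:\mathbb{R}^d\to\mathbb{R}$ be differentiable with $L$-Lipschitz gradient. Consider parallel-step SGD iterations with $p$ processors (as defined in the context) with constant learning rate $\alpha\le\frac{1}{8L}$ satisfying elastic consistency with constant $B$. Then for every $t\ge0$, $$\mathbb{E}[f(\vec x_{t+1})]\le\mathbb{E}[f(\vec x_t)]-\frac{\alpha}{8}\mathbb{E}\|\nabla f(\vec x_t)\|^2+\frac{\alpha^3B^2L^2}{2}+\frac{L\alpha^2\sigma^2}{p}+2L^3\alpha^4B^2.$$
   Context: All random objects live on a probability space with a filtration $(\mathcal F_t)_{t\ge0}$. Parallel-step SGD iterations with $p$ processors: $\vec x_0\in\mathbb{R}^d$ is deterministic. For each $t\ge0$ a set $I_t\subseteq\{1,\dots,p\}$ with $p/2\le|I_t|\le p$ is given (fixed independently of the algorithm's randomness). Each $i\in I_t$ holds a view $\vec v_t^i$; $\vec x_t$ and all $\vec v_t^i$ are $\mathcal F_t$-measurable. Each $i\in I_t$ computes an $\mathcal F_{t+1}$-measurable stochastic gradient $\tilde G(\vec v_t^i)$; conditionally on $\mathcal F_t$ these are independent across $i\in I_t$, with $\mathbb{E}[\tilde G(\vec v_t^i)\mid\mathcal F_t]=\nabla f(\vec v_t^i)$ and $\mathbb{E}[\|\tilde G(\vec v_t^i)-\nabla f(\vec v_t^i)\|^2\mid\mathcal F_t]\le\sigma^2$. Update: $\vec x_{t+1}=\vec x_t-\frac{\alpha}{p}\sum_{i\in I_t}\tilde G(\vec v_t^i)$. Elastic consistency with constant $B>0$: $\mathbb{E}\|\vec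 x_t-\vec v_t^i\|^2\le\alpha^2B^2$ for all $t$ and all $i\in I_t$. *)

theory Defs
  imports "HOL-Probability.Probability"
begin

definition cond_indep_vars ::
  "'a measure \<Rightarrow> 'a measure \<Rightarrow> 'i set \<Rightarrow> ('i \<Rightarrow> 'a \<Rightarrow> 'b::topological_space) \<Rightarrow> bool" where
  "cond_indep_vars M F I X \<longleftrightarrow>
     (\<forall>A. (\<forall>i\<in>I. A i \<in> sets borel) \<longrightarrow>
        (AE \<omega> in M. real_cond_exp M F (\<lambda>\<omega>. \<Prod>i\<in>I. indicator (A i) (X i \<omega>)) \<omega>
                   = (\<Prod>i\<in>I. real_cond_exp M F (\<lambda>\<omega>. indicator (A i) (X i \<omega>)) \<omega>)))"

end

theory Submission
  imports Defs
begin


lemma descent: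
  fixes f :: "'v::euclidean_space \<Rightarrow> real" and grad :: "'v \<Rightarrow> 'v"
  assumes deriv: "\<And>y. (f has_derivative (\<lambda>h. grad y \<bullet> h)) (at y)"
    and lip: "L-lipschitz_on UNIV grad"
  shows "f y \<le> f x + grad x \<bullet> (y - x) + L / 2 * (norm (y - x))\<^sup>2"
proof -
  define d where "d = y - x"
  define \<phi> where "\<phi> = (\<lambda>s::real. f (x + s *\<^sub>R d) - s * (grad x \<bullet> d) - L / 2 * s\<^sup>2 * (norm d)\<^sup>2)"
  have D: "DERIV \<phi> s :> (grad (x + s *\<^sub>R d) \<bullet> d - grad x \<bullet> d - L * s * (norm d)\<^sup>2)" for s
  proof -
    have l: "((\<lambda>s::real. x + s *\<^sub>R d) has_derivative (\<lambda>h. h *\<^sub>R d)) (at s)"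
      by (auto intro!: derivative_eq_intros)
    have "((\<lambda>s. f (x + s *\<^sub>R d)) has_derivative (\<lambda>h. grad (x + s *\<^sub>R d) \<bullet> (h *\<^sub>R d))) (at s)"
      using has_derivative_compose[OF l deriv] by simp
    have "((\<lambda>s. f (x + s *\<^sub>R d)) has_real_derivative (grad (x + s *\<^sub>R d) \<bullet> d)) (at s)"
    proof -
      have "(\<lambda>h::real. h * (grad (x + s *\<^sub>R d) \<bullet> d)) = (*) (grad (x + s *\<^sub>R d) \<bullet> d)"
        by (auto simp: fun_eq_iff)
      with \<open>((\<lambda>s. f (x + s *\<^sub>R d)) has_derivative (\<lambda>h. grad (x + s *\<^sub>R d) \<bullet> (h *\<^sub>R d))) (at s)\<close>
      show ?thesis unfolding has_field_derivative_def by simp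
    qed
    then show ?thesis unfolding \<phi>_def
      by (auto intro!: derivative_eq_intros simp: power2_eq_square algebra_simps)
  qed
  have L0: "0 \<le> L" using lipschitz_on_nonneg[OF lip] .
  have "\<phi> 1 \<le> \<phi> 0"
  proof (rule DERIV_nonpos_imp_nonincreasing[of 0 1 \<phi>])
    fix s :: real assume s: "0 \<le> s" "s \<le> 1"
    have "(grad (x + s *\<^sub>R d) - grad x) \<bullet> d \<le> norm (grad (x + s *\<^sub>R d) - grad x) * norm d"
      by (rule norm_cauchy_schwarz)
    also have "\<dots> \<le> (L * norm (s *\<^sub>R d)) * norm d"
      using lipschitz_on_normD[OF lip, of "x + s *\<^sub>R d" x]
      by (intro mult_right_mono) auto
    also have "\<dots> = L * s * (norm d)\<^sup>2" using s by (simp add: power2_eq_square)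
    finally have "grad (x + s *\<^sub>R d) \<bullet> d - grad x \<bullet> d - L * s * (norm d)\<^sup>2 \<le> 0"
      by (simp add: inner_diff_left)
    then show "\<exists>y. DERIV \<phi> s :> y \<and> y \<le> 0" using D by blast
  qed simp
  then show ?thesis unfolding \<phi>_def d_def by simp
qed



definition l2 :: "'a measure \<Rightarrow> ('a \<Rightarrow> 'v::euclidean_space) \<Rightarrow> bool" where
  "l2 M A \<longleftrightarrow> A \<in> borel_measurable M \<and> integrable M (\<lambda>\<omega>. (norm (A \<omega>))\<^sup>2)"

lemma abs_mult_le_sq: "\<bar>a * b\<bar> \<le> a\<^sup>2 + (b::real)\<^sup>2"
proof -
  have "2 * \<bar>a\<bar> * \<bar>b\<bar> \<le> \<bar>a\<bar>\<^sup>2 + \<bar>b\<bar>\<^sup>2" by (rule sum_squares_bound)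
  moreover have "0 \<le> \<bar>a\<bar> * \<bar>b\<bar>" by simp
  moreover have "\<bar>a\<bar>\<^sup>2 = a\<^sup>2" "\<bar>b\<bar>\<^sup>2 = b\<^sup>2" by simp_all
  moreover have "\<bar>a * b\<bar> = \<bar>a\<bar> * \<bar>b\<bar>" by (simp add: abs_mult)
  ultimately show ?thesis by linarith
qed
lemma le_one_plus_sq: "x \<le> 1 + (x::real)\<^sup>2"
proof -
  have "2 * x * 1 \<le> x\<^sup>2 + 1\<^sup>2" by (rule sum_squares_bound)
  then have "2 * x \<le> x\<^sup>2 + 1" by simp
  moreover have "0 \<le> x\<^sup>2" by simp
  ultimately show ?thesis by linarith
qed
lemma sq_le_aux: "(a + b)\<^sup>2 \<le> 2 * a\<^sup>2 + 2 * (b::real)\<^sup>2"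
proof -
  have "2 * a * b \<le> a\<^sup>2 + b\<^sup>2" by (rule sum_squares_bound)
  then show ?thesis by (simp add: power2_sum)
qed

lemma norm_add_sq_le: "(norm (a + b))\<^sup>2 \<le> 2 * (norm a)\<^sup>2 + 2 * (norm (b::'v::real_normed_vector))\<^sup>2"
proof -
  have "(norm (a + b))\<^sup>2 \<le> (norm a + norm b)\<^sup>2"
    by (intro power_mono norm_triangle_ineq) auto
  also have "\<dots> \<le> 2 * (norm a)\<^sup>2 + 2 * (norm b)\<^sup>2" by (rule sq_le_aux)
  finally show ?thesis .
qed

lemma l2_add:
  assumes "l2 M A" "l2 M B"
  shows "l2 M (\<lambda>\<omega>. A \<omega> + B \<omega>)"
proof -
  have [measurable]: "A \<in> borel_measurable M" "B \<in> borel_measurable M"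
    and i: "integrable M (\<lambda>\<omega>. (norm (A \<omega>))\<^sup>2)" "integrable M (\<lambda>\<omega>. (norm (B \<omega>))\<^sup>2)"
    using assms unfolding l2_def by auto
  have "integrable M (\<lambda>\<omega>. (norm (A \<omega> + B \<omega>))\<^sup>2)"
  proof (rule Bochner_Integration.integrable_bound[where f="\<lambda>\<omega>. 2 * (norm (A \<omega>))\<^sup>2 + 2 * (norm (B \<omega>))\<^sup>2"])
    show "integrable M (\<lambda>\<omega>. 2 * (norm (A \<omega>))\<^sup>2 + 2 * (norm (B \<omega>))\<^sup>2)" using i by simp
    show "(\<lambda>\<omega>. (norm (A \<omega> + B \<omega>))\<^sup>2) \<in> borel_measurable M" by measurable
    show "AE \<omega> in M. norm ((norm (A \<omega> + B \<omega>))\<^sup>2) \<le> norm (2 * (norm (A \<omega>))\<^sup>2 + 2 * (norm (B \<omega>))\<^sup>2)"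
      by (intro AE_I2) (simp add: norm_add_sq_le)
  qed
  then show ?thesis unfolding l2_def by simp
qed

lemma l2_scaleR: "l2 M A \<Longrightarrow> l2 M (\<lambda>\<omega>. c *\<^sub>R A \<omega>)"
  unfolding l2_def by (auto simp: power_mult_distrib)

lemma l2_uminus: "l2 M A \<Longrightarrow> l2 M (\<lambda>\<omega>. - A \<omega>)"
  unfolding l2_def by auto

lemma l2_diff: "l2 M A \<Longrightarrow> l2 M B \<Longrightarrow> l2 M (\<lambda>\<omega>. A \<omega> - B \<omega>)"
  using l2_add[of M A "\<lambda>\<omega>. - B \<omega>"] l2_uminus[of M B] by simp

lemma l2_sum: "(\<And>i. i \<in> K \<Longrightarrow> l2 M (A i)) \<Longrightarrow> l2 M (\<lambda>\<omega>. \<Sum>i\<in>K. A i \<omega>)"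
proof (induction K rule: infinite_finite_induct)
  case (infinite K) then show ?case by (simp add: l2_def)
next
  case empty then show ?case by (simp add: l2_def)
next
  case (insert i K) then show ?case by (simp add: l2_add)
qed

lemma l2_const: "finite_measure M \<Longrightarrow> l2 M (\<lambda>\<omega>. c)"
  unfolding l2_def by (simp add: finite_measure.integrable_const)

lemma l2_inner_int:
  assumes "l2 M A" "l2 M B"
  shows "integrable M (\<lambda>\<omega>. A \<omega> \<bullet> B \<omega>)"
proof -
  have [measurable]: "A \<in> borel_measurable M" "B \<in> borel_measurable M"
    and i: "integrable M (\<lambda>\<omega>. (norm (A \<omega>))\<^sup>2)" "integrable M (\<lambda>\<omega>. (norm (B \<omega>))\<^sup>2)"
    using assms unfolding l2_def by auto
  show ?thesis
  proof (rule Bochner_Integration.integrable_bound[where f="\<lambda>\<omega>. (norm (A \<omega>))\<^sup>2 + (norm (B \<omega>))\<^sup>2"])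
    show "integrable M (\<lambda>\<omega>. (norm (A \<omega>))\<^sup>2 + (norm (B \<omega>))\<^sup>2)" using i by simp
    show "(\<lambda>\<omega>. A \<omega> \<bullet> B \<omega>) \<in> borel_measurable M" by measurable
    show "AE \<omega> in M. norm (A \<omega> \<bullet> B \<omega>) \<le> norm ((norm (A \<omega>))\<^sup>2 + (norm (B \<omega>))\<^sup>2)"
    proof (intro AE_I2)
      fix \<omega>
      have "\<bar>A \<omega> \<bullet> B \<omega>\<bar> \<le> norm (A \<omega>) * norm (B \<omega>)" by (rule Cauchy_Schwarz_ineq2)
      also have "\<dots> \<le> (norm (A \<omega>))\<^sup>2 + (norm (B \<omega>))\<^sup>2"
        using abs_mult_le_sq[of "norm (A \<omega>)" "norm (B \<omega>)"] by simp
      finally show "norm (A \<omega> \<bullet> B \<omega>) \<le> norm ((norm (A \<omega>))\<^sup>2 + (norm (B \<omega>))\<^sup>2)" by simp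
    qed
  qed
qed

lemma l2_real_mult_int:
  fixes a b :: "_ \<Rightarrow> real"
  assumes "l2 M a" "l2 M b"
  shows "integrable M (\<lambda>\<omega>. a \<omega> * b \<omega>)"
  using l2_inner_int[OF assms] by simp

lemma l2_inner_unit:
  assumes "l2 M A" "norm u \<le> 1"
  shows "l2 M (\<lambda>\<omega>. A \<omega> \<bullet> u)"
proof -
  have [measurable]: "A \<in> borel_measurable M"
    and i: "integrable M (\<lambda>\<omega>. (norm (A \<omega>))\<^sup>2)"
    using assms unfolding l2_def by auto
  have "integrable M (\<lambda>\<omega>. (norm (A \<omega> \<bullet> u))\<^sup>2)"
  proof (rule Bochner_Integration.integrable_bound[where f="\<lambda>\<omega>. (norm (A \<omega>))\<^sup>2"])
    show "(\<lambda>\<omega>. (norm (A \<omega> \<bullet> u))\<^sup>2) \<in> borel_measurable M" by measurable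
    show "AE \<omega> in M. norm ((norm (A \<omega> \<bullet> u))\<^sup>2) \<le> norm ((norm (A \<omega>))\<^sup>2)"
    proof (intro AE_I2)
      fix \<omega>
      have "\<bar>A \<omega> \<bullet> u\<bar> \<le> norm (A \<omega>) * norm u" by (rule Cauchy_Schwarz_ineq2)
      also have "\<dots> \<le> norm (A \<omega>)" using assms(2) by (simp add: mult_left_le)
      finally have "\<bar>A \<omega> \<bullet> u\<bar> \<le> norm (A \<omega>)" .
      then have "\<bar>A \<omega> \<bullet> u\<bar>\<^sup>2 \<le> (norm (A \<omega>))\<^sup>2" by (intro power_mono) auto
      then show "norm ((norm (A \<omega> \<bullet> u))\<^sup>2) \<le> norm ((norm (A \<omega>))\<^sup>2)" by simp
    qed
  qed (use i in auto)
  then show ?thesis unfolding l2_def by simp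
qed

lemma l2_int:
  assumes "prob_space M" "l2 M a"
  shows "integrable M a"
proof -
  interpret prob_space M by fact
  have [measurable]: "a \<in> borel_measurable M"
    and i: "integrable M (\<lambda>\<omega>. (norm (a \<omega>))\<^sup>2)"
    using assms unfolding l2_def by auto
  show ?thesis
  proof (rule Bochner_Integration.integrable_bound[where f="\<lambda>\<omega>. 1 + (norm (a \<omega>))\<^sup>2"])
    show "integrable M (\<lambda>\<omega>. 1 + (norm (a \<omega>))\<^sup>2)" using i by simp
    show "AE \<omega> in M. norm (a \<omega>) \<le> norm (1 + (norm (a \<omega>))\<^sup>2)"
    proof (intro AE_I2)
      fix \<omega>
      have "norm (a \<omega>) \<le> 1 + (norm (a \<omega>))\<^sup>2"
        by (rule le_one_plus_sq)
      then show "norm (a \<omega>) \<le> norm (1 + (norm (a \<omega>))\<^sup>2)" by simp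
    qed
  qed simp
qed



lemma meq:
  fixes V :: "'a \<Rightarrow> 'w::topological_space" and k :: "'w \<Rightarrow> real"
  assumes V[measurable]: "V \<in> borel_measurable M"
    and w[measurable]: "w1 \<in> borel_measurable M" "w2 \<in> borel_measurable M"
    and pos: "\<And>\<omega>. 0 \<le> w1 \<omega>" "\<And>\<omega>. 0 \<le> w2 \<omega>"
    and int: "integrable M w1" "integrable M w2"
    and hyp: "\<And>B. B \<in> sets borel \<Longrightarrow>
       (\<integral>\<omega>. w1 \<omega> * indicator B (V \<omega>) \<partial>M) = (\<integral>\<omega>. w2 \<omega> * indicator B (V \<omega>) \<partial>M)"
    and k[measurable]: "k \<in> borel_measurable borel"
  shows "(\<integral>\<omega>. w1 \<omega> * k (V \<omega>) \<partial>M) = (\<integral>\<omega>. w2 \<omega> * k (V \<omega>) \<partial>M)"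
proof -
  have em: "emeasure (distr (density M (\<lambda>\<omega>. ennreal (w \<omega>))) borel V) B
      = ennreal (\<integral>\<omega>. w \<omega> * indicator B (V \<omega>) \<partial>M)"
    if [measurable]: "w \<in> borel_measurable M" and wp: "\<And>\<omega>. 0 \<le> w \<omega>" and wi: "integrable M w"
      and B[measurable]: "B \<in> sets borel" for w B
  proof -
    have Vd: "V \<in> measurable (density M (\<lambda>\<omega>. ennreal (w \<omega>))) borel"
      by (simp add: measurable_cong_sets[OF sets_density refl])
    have "emeasure (distr (density M (\<lambda>\<omega>. ennreal (w \<omega>))) borel V) B
        = emeasure (density M (\<lambda>\<omega>. ennreal (w \<omega>))) (V -` B \<inter> space M)"
      by (subst emeasure_distr[OF Vd B]) simp
    also have "\<dots> = (\<integral>\<^sup>+\<omega>. ennreal (w \<omega>) * indicator (V -` B \<inter> space M) \<omega> \<partial>M)"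
      by (rule emeasure_density) measurable
    also have "\<dots> = (\<integral>\<^sup>+\<omega>. ennreal (w \<omega> * indicator B (V \<omega>)) \<partial>M)"
      by (intro nn_integral_cong) (auto simp: indicator_def)
    also have "\<dots> = ennreal (\<integral>\<omega>. w \<omega> * indicator B (V \<omega>) \<partial>M)"
    proof (rule nn_integral_eq_integral)
      show "integrable M (\<lambda>\<omega>. w \<omega> * indicator B (V \<omega>))"
        by (rule Bochner_Integration.integrable_bound[OF wi]) (auto intro!: AE_I2 simp: indicator_def wp)
    qed (auto intro!: AE_I2 simp: wp)
    finally show ?thesis .
  qed
  have eqN: "distr (density M (\<lambda>\<omega>. ennreal (w1 \<omega>))) borel V = distr (density M (\<lambda>\<omega>. ennreal (w2 \<omega>))) borel V"
    by (rule measure_eqI) (auto simp: em pos int hyp)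
  have ii: "integral\<^sup>L (distr (density M (\<lambda>\<omega>. ennreal (w \<omega>))) borel V) k = (\<integral>\<omega>. w \<omega> * k (V \<omega>) \<partial>M)"
    if [measurable]: "w \<in> borel_measurable M" and wp: "\<And>\<omega>. 0 \<le> w \<omega>" for w
  proof -
    have Vd: "V \<in> measurable (density M (\<lambda>\<omega>. ennreal (w \<omega>))) borel"
      by (simp add: measurable_cong_sets[OF sets_density refl])
    have "integral\<^sup>L (distr (density M (\<lambda>\<omega>. ennreal (w \<omega>))) borel V) k
        = integral\<^sup>L (density M (\<lambda>\<omega>. ennreal (w \<omega>))) (\<lambda>\<omega>. k (V \<omega>))"
      by (rule integral_distr[OF Vd k])
    also have "\<dots> = (\<integral>\<omega>. w \<omega> *\<^sub>R k (V \<omega>) \<partial>M)"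
      by (rule integral_density) (auto simp: wp)
    finally show ?thesis by simp
  qed
  show ?thesis using ii[of w1] ii[of w2] eqN pos by simp
qed



lemma l2_bound:
  assumes "l2 M a" "g \<in> borel_measurable M" "\<And>\<omega>. norm (g \<omega>) \<le> norm (a \<omega>)"
  shows "l2 M g"
proof -
  have [measurable]: "a \<in> borel_measurable M" "g \<in> borel_measurable M"
    and i: "integrable M (\<lambda>\<omega>. (norm (a \<omega>))\<^sup>2)"
    using assms unfolding l2_def by auto
  have "integrable M (\<lambda>\<omega>. (norm (g \<omega>))\<^sup>2)"
  proof (rule Bochner_Integration.integrable_bound[OF i])
    show "AE \<omega> in M. norm ((norm (g \<omega>))\<^sup>2) \<le> norm ((norm (a \<omega>))\<^sup>2)"
      using assms(3) by (intro AE_I2) (simp add: power_mono)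
  qed measurable
  then show ?thesis unfolding l2_def by simp
qed

lemma sfs_of_prob:
  assumes "prob_space M" "subalgebra M F"
  shows "sigma_finite_subalgebra M F"
proof -
  interpret prob_space M by fact
  have "finite_measure_subalgebra M F"
    by unfold_locales (use assms(2) in auto)
  then show ?thesis by (rule finite_measure_subalgebra_is_sigma_finite)
qed

lemma bounded_int:
  fixes g :: "'a \<Rightarrow> real"
  assumes "prob_space M" "g \<in> borel_measurable M" "\<And>\<omega>. \<bar>g \<omega>\<bar> \<le> c"
  shows "integrable M g"
proof -
  interpret prob_space M by fact
  show ?thesis
  proof (rule Bochner_Integration.integrable_bound[where f="\<lambda>_. c"])
    show "AE \<omega> in M. norm (g \<omega>) \<le> norm c"
      by (intro AE_I2) (metis assms(3) abs_ge_self order_trans real_norm_def)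
  qed (use assms in auto)
qed

lemma ci_core:
  fixes U V :: "'a \<Rightarrow> 'v::euclidean_space" and h k :: "'v \<Rightarrow> real"
  assumes P: "prob_space M" and S: "subalgebra M F"
    and U[measurable]: "U \<in> borel_measurable M" and V[measurable]: "V \<in> borel_measurable M"
    and CI: "\<And>A B. A \<in> sets borel \<Longrightarrow> B \<in> sets borel \<Longrightarrow>
       AE \<omega> in M. real_cond_exp M F (\<lambda>\<omega>. indicator A (U \<omega>) * indicator B (V \<omega>)) \<omega>
         = real_cond_exp M F (\<lambda>\<omega>. indicator A (U \<omega>)) \<omega> * real_cond_exp M F (\<lambda>\<omega>. indicator B (V \<omega>)) \<omega>"
    and h[measurable]: "h \<in> borel_measurable borel" and k[measurable]: "k \<in> borel_measurable borel"
    and hl: "l2 M (\<lambda>\<omega>. h (U \<omega>))" and kl: "l2 M (\<lambda>\<omega>. k (V \<omega>))"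
    and ml: "l2 M mY" and mF[measurable]: "mY \<in> borel_measurable F"
    and mAE: "AE \<omega> in M. real_cond_exp M F (\<lambda>\<omega>. k (V \<omega>)) \<omega> = mY \<omega>"
  shows "(\<integral>\<omega>. h (U \<omega>) * k (V \<omega>) \<partial>M) = (\<integral>\<omega>. h (U \<omega>) * mY \<omega> \<partial>M)"
proof -
  interpret prob_space M by fact
  interpret sigma_finite_subalgebra M F using sfs_of_prob[OF P S] .
  have mM[measurable]: "mY \<in> borel_measurable M" using measurable_from_subalg[OF S mF] .
  have kVi: "integrable M (\<lambda>\<omega>. k (V \<omega>))" using l2_int[OF P kl] .
  have mi: "integrable M mY" using l2_int[OF P ml] .
  have one: "AE \<omega> in M. real_cond_exp M F (\<lambda>\<omega>. 1) \<omega> = 1"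
    by (rule real_cond_exp_F_meas) auto
  have cA_props: "AE \<omega> in M. 0 \<le> real_cond_exp M F (\<lambda>\<omega>. indicator A (U \<omega>)) \<omega>
      \<and> real_cond_exp M F (\<lambda>\<omega>. indicator A (U \<omega>)) \<omega> \<le> 1"
    if [measurable]: "A \<in> sets borel" for A
  proof -
    have ii: "integrable M (\<lambda>\<omega>. indicator A (U \<omega>) :: real)"
      by (rule bounded_int[OF P, where c=1]) auto
    have "AE \<omega> in M. 0 \<le> real_cond_exp M F (\<lambda>\<omega>. indicator A (U \<omega>)) \<omega>"
      by (rule real_cond_exp_pos) auto
    moreover have "AE \<omega> in M. real_cond_exp M F (\<lambda>\<omega>. indicator A (U \<omega>)) \<omega> \<le> real_cond_exp M F (\<lambda>\<omega>. 1) \<omega>"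
      by (rule real_cond_exp_mono) (auto simp: ii split: split_indicator)
    ultimately show ?thesis using one by eventually_elim auto
  qed
  have step1: "(\<integral>\<omega>. indicator A (U \<omega>) * indicator B (V \<omega>) \<partial>M)
      = (\<integral>\<omega>. real_cond_exp M F (\<lambda>\<omega>. indicator A (U \<omega>)) \<omega> * indicator B (V \<omega>) \<partial>M)"
    if [measurable]: "A \<in> sets borel" "B \<in> sets borel" for A B
  proof -
    let ?cA = "real_cond_exp M F (\<lambda>\<omega>. indicator A (U \<omega>))"
    let ?cB = "real_cond_exp M F (\<lambda>\<omega>. indicator B (V \<omega>))"
    have iAB: "integrable M (\<lambda>\<omega>. indicator A (U \<omega>) * indicator B (V \<omega>) :: real)"
      by (rule bounded_int[OF P, where c=1]) (auto simp: indicator_def)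
    have iA: "integrable M (\<lambda>\<omega>. indicator A (U \<omega>) :: real)"
      by (rule bounded_int[OF P, where c=1]) auto
    have icA: "integrable M ?cA" using real_cond_exp_int(1)[OF iA] .
    have "(\<integral>\<omega>. indicator A (U \<omega>) * indicator B (V \<omega>) \<partial>M)
        = (\<integral>\<omega>. real_cond_exp M F (\<lambda>\<omega>. indicator A (U \<omega>) * indicator B (V \<omega>)) \<omega> \<partial>M)"
      using real_cond_exp_int(2)[OF iAB] by simp
    also have "\<dots> = (\<integral>\<omega>. ?cA \<omega> * ?cB \<omega> \<partial>M)"
      by (rule integral_cong_AE) (use CI[OF that] in auto)
    also have "\<dots> = (\<integral>\<omega>. ?cA \<omega> * indicator B (V \<omega>) \<partial>M)"
    proof (rule real_cond_exp_intg(2))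
      show "integrable M (\<lambda>\<omega>. ?cA \<omega> * indicator B (V \<omega>))"
        by (rule Bochner_Integration.integrable_bound[OF icA]) (auto intro!: AE_I2 simp: indicator_def)
    qed auto
    finally show ?thesis .
  qed
  have step2: "(\<integral>\<omega>. indicator A (U \<omega>) * k (V \<omega>) \<partial>M) = (\<integral>\<omega>. indicator A (U \<omega>) * mY \<omega> \<partial>M)"
    if [measurable]: "A \<in> sets borel" for A
  proof -
    let ?cA = "real_cond_exp M F (\<lambda>\<omega>. indicator A (U \<omega>))"
    have iA: "integrable M (\<lambda>\<omega>. indicator A (U \<omega>) :: real)"
      by (rule bounded_int[OF P, where c=1]) auto
    have icA: "integrable M ?cA" using real_cond_exp_int(1)[OF iA] .
    have icAp: "integrable M (\<lambda>\<omega>. max (?cA \<omega>) 0)"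
      using icA by auto
    have AEp: "AE \<omega> in M. max (?cA \<omega>) 0 = ?cA \<omega>"
      using cA_props[OF that] by eventually_elim auto
    have "(\<integral>\<omega>. indicator A (U \<omega>) * k (V \<omega>) \<partial>M) = (\<integral>\<omega>. max (?cA \<omega>) 0 * k (V \<omega>) \<partial>M)"
    proof (rule meq[where V=V])
      fix B :: "'v set" assume [measurable]: "B \<in> sets borel"
      show "(\<integral>\<omega>. indicator A (U \<omega>) * indicator B (V \<omega>) \<partial>M) = (\<integral>\<omega>. max (?cA \<omega>) 0 * indicator B (V \<omega>) \<partial>M)"
        unfolding step1[OF that \<open>B \<in> sets borel\<close>]
        by (rule integral_cong_AE) (use AEp in auto)
    qed (auto simp: iA icAp)
    also have "\<dots> = (\<integral>\<omega>. ?cA \<omega> * k (V \<omega>) \<partial>M)"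
      by (rule integral_cong_AE) (use AEp in auto)
    also have "\<dots> = (\<integral>\<omega>. ?cA \<omega> * real_cond_exp M F (\<lambda>\<omega>. k (V \<omega>)) \<omega> \<partial>M)"
    proof (rule real_cond_exp_intg(2)[symmetric])
      show "integrable M (\<lambda>\<omega>. ?cA \<omega> * k (V \<omega>))"
      proof (rule Bochner_Integration.integrable_bound[OF kVi])
        show "AE \<omega> in M. norm (?cA \<omega> * k (V \<omega>)) \<le> norm (k (V \<omega>))"
          using cA_props[OF that]
        proof eventually_elim
          case (elim \<omega>)
          then show ?case by (simp add: abs_mult mult_left_le_one_le)
        qed
      qed auto
    qed auto
    also have "\<dots> = (\<integral>\<omega>. mY \<omega> * ?cA \<omega> \<partial>M)"
      by (rule integral_cong_AE) (use mAE in auto)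
    also have "\<dots> = (\<integral>\<omega>. mY \<omega> * indicator A (U \<omega>) \<partial>M)"
    proof (rule real_cond_exp_intg(2))
      show "integrable M (\<lambda>\<omega>. mY \<omega> * indicator A (U \<omega>))"
        by (rule Bochner_Integration.integrable_bound[OF mi]) (auto intro!: AE_I2 simp: indicator_def)
    qed auto
    finally show ?thesis by (simp add: mult.commute)
  qed
  define Y where "Y = (\<lambda>\<omega>. k (V \<omega>))"
  have Y[measurable]: "Y \<in> borel_measurable M" unfolding Y_def by measurable
  define w1 where "w1 = (\<lambda>\<omega>. max (Y \<omega>) 0 + max (- mY \<omega>) 0)"
  define w2 where "w2 = (\<lambda>\<omega>. max (mY \<omega>) 0 + max (- Y \<omega>) 0)"
  have w[measurable]: "w1 \<in> borel_measurable M" "w2 \<in> borel_measurable M"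
    unfolding w1_def w2_def by measurable
  have wdiff: "w1 \<omega> - w2 \<omega> = Y \<omega> - mY \<omega>" for \<omega> unfolding w1_def w2_def by auto
  have Yl: "l2 M Y" using kl unfolding Y_def .
  have absl: "l2 M (\<lambda>\<omega>. \<bar>Y \<omega>\<bar> + \<bar>mY \<omega>\<bar>)"
    by (intro l2_add l2_bound[OF Yl] l2_bound[OF ml]) auto
  have w1l: "l2 M w1" by (rule l2_bound[OF absl]) (auto simp: w1_def)
  have w2l: "l2 M w2" by (rule l2_bound[OF absl]) (auto simp: w2_def)
  have Yi: "integrable M Y" using l2_int[OF P Yl] .
  have hyp3: "(\<integral>\<omega>. w1 \<omega> * indicator A (U \<omega>) \<partial>M) = (\<integral>\<omega>. w2 \<omega> * indicator A (U \<omega>) \<partial>M)"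
    if [measurable]: "A \<in> sets borel" for A
  proof -
    have i: "integrable M (\<lambda>\<omega>. g \<omega> * indicator A (U \<omega>))" if gi: "integrable M g" "g \<in> borel_measurable M" for g :: "'a \<Rightarrow> real"
      by (rule Bochner_Integration.integrable_bound[OF gi(1)]) (use gi in \<open>auto intro!: AE_I2 simp: indicator_def\<close>)
    have "(\<integral>\<omega>. w1 \<omega> * indicator A (U \<omega>) \<partial>M) - (\<integral>\<omega>. w2 \<omega> * indicator A (U \<omega>) \<partial>M)
        = (\<integral>\<omega>. (w1 \<omega> - w2 \<omega>) * indicator A (U \<omega>) \<partial>M)"
      by (subst Bochner_Integration.integral_diff[symmetric])
         (use i[OF l2_int[OF P w1l]] i[OF l2_int[OF P w2l]] in \<open>auto simp: left_diff_distrib\<close>)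
    also have "\<dots> = (\<integral>\<omega>. Y \<omega> * indicator A (U \<omega>) - mY \<omega> * indicator A (U \<omega>) \<partial>M)"
      by (simp add: wdiff left_diff_distrib)
    also have "\<dots> = (\<integral>\<omega>. Y \<omega> * indicator A (U \<omega>) \<partial>M) - (\<integral>\<omega>. mY \<omega> * indicator A (U \<omega>) \<partial>M)"
      by (rule Bochner_Integration.integral_diff) (auto intro!: i Yi mi)
    also have "\<dots> = 0" using step2[OF that] unfolding Y_def by (simp add: mult.commute)
    finally show ?thesis by simp
  qed
  have eq3: "(\<integral>\<omega>. w1 \<omega> * h (U \<omega>) \<partial>M) = (\<integral>\<omega>. w2 \<omega> * h (U \<omega>) \<partial>M)"
  proof (rule meq[where V=U])
    show "integrable M w1" using l2_int[OF P w1l] .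
    show "integrable M w2" using l2_int[OF P w2l] .
    fix B :: "'v set" assume "B \<in> sets borel"
    then show "(\<integral>\<omega>. w1 \<omega> * indicator B (U \<omega>) \<partial>M) = (\<integral>\<omega>. w2 \<omega> * indicator B (U \<omega>) \<partial>M)"
      by (rule hyp3)
  qed (auto simp: w1_def w2_def)
  have "(\<integral>\<omega>. h (U \<omega>) * k (V \<omega>) \<partial>M) - (\<integral>\<omega>. h (U \<omega>) * mY \<omega> \<partial>M)
      = (\<integral>\<omega>. h (U \<omega>) * Y \<omega> - h (U \<omega>) * mY \<omega> \<partial>M)"
    unfolding Y_def
    by (rule Bochner_Integration.integral_diff[symmetric]) (auto intro!: l2_real_mult_int hl kl ml)
  also have "\<dots> = (\<integral>\<omega>. w1 \<omega> * h (U \<omega>) - w2 \<omega> * h (U \<omega>) \<partial>M)"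
    by (intro Bochner_Integration.integral_cong refl)
       (metis wdiff left_diff_distrib mult.commute right_diff_distrib)
  also have "\<dots> = (\<integral>\<omega>. w1 \<omega> * h (U \<omega>) \<partial>M) - (\<integral>\<omega>. w2 \<omega> * h (U \<omega>) \<partial>M)"
    by (rule Bochner_Integration.integral_diff) (auto intro!: l2_real_mult_int hl w1l w2l)
  also have "\<dots> = 0" using eq3 by simp
  finally show ?thesis by simp
qed



lemma unbiased_comp:
  fixes Gi gi :: "'a \<Rightarrow> 'v::euclidean_space" and z :: "'a \<Rightarrow> real"
  assumes P: "prob_space M" and S: "subalgebra M F"
    and Gl: "l2 M Gi" and gl: "l2 M gi" and zl: "l2 M z" and zF[measurable]: "z \<in> borel_measurable F"
    and b: "b \<in> Basis"
    and unb: "AE \<omega> in M. real_cond_exp M F (\<lambda>\<omega>. Gi \<omega> \<bullet> b) \<omega> = gi \<omega> \<bullet> b"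
  shows "(\<integral>\<omega>. z \<omega> * (Gi \<omega> \<bullet> b) \<partial>M) = (\<integral>\<omega>. z \<omega> * (gi \<omega> \<bullet> b) \<partial>M)"
proof -
  interpret sigma_finite_subalgebra M F using sfs_of_prob[OF P S] .
  have [measurable]: "Gi \<in> borel_measurable M" "gi \<in> borel_measurable M" using Gl gl unfolding l2_def by auto
  have Gbl: "l2 M (\<lambda>\<omega>. Gi \<omega> \<bullet> b)" by (rule l2_inner_unit[OF Gl]) (simp add: b)
  have "(\<integral>\<omega>. z \<omega> * (Gi \<omega> \<bullet> b) \<partial>M) = (\<integral>\<omega>. z \<omega> * real_cond_exp M F (\<lambda>\<omega>. Gi \<omega> \<bullet> b) \<omega> \<partial>M)"
    by (rule real_cond_exp_intg(2)[symmetric]) (auto intro!: l2_real_mult_int zl Gbl)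
  also have "\<dots> = (\<integral>\<omega>. z \<omega> * (gi \<omega> \<bullet> b) \<partial>M)"
    by (rule integral_cong_AE) (use unb measurable_from_subalg[OF S zF] in auto)
  finally show ?thesis .
qed

lemma unbiased_vec:
  fixes Gi gi Z :: "'a \<Rightarrow> 'v::euclidean_space"
  assumes P: "prob_space M" and S: "subalgebra M F"
    and Gl: "l2 M Gi" and gl: "l2 M gi" and Zl: "l2 M Z" and ZF[measurable]: "Z \<in> borel_measurable F"
    and unb: "\<And>b. b \<in> Basis \<Longrightarrow> AE \<omega> in M. real_cond_exp M F (\<lambda>\<omega>. Gi \<omega> \<bullet> b) \<omega> = gi \<omega> \<bullet> b"
  shows "(\<integral>\<omega>. Z \<omega> \<bullet> Gi \<omega> \<partial>M) = (\<integral>\<omega>. Z \<omega> \<bullet> gi \<omega> \<partial>M)"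
proof -
  have ib: "integrable M (\<lambda>\<omega>. (A \<omega> \<bullet> b) * (Z \<omega> \<bullet> b))" if "l2 M A" "b \<in> Basis" for A :: "'a \<Rightarrow> 'v" and b
    by (intro l2_real_mult_int l2_inner_unit that Zl) (simp_all add: that)
  have "(\<integral>\<omega>. Z \<omega> \<bullet> Gi \<omega> \<partial>M) = (\<integral>\<omega>. (\<Sum>b\<in>Basis. (Z \<omega> \<bullet> b) * (Gi \<omega> \<bullet> b)) \<partial>M)"
    by (simp add: euclidean_inner[of "Z _" "Gi _"])
  also have "\<dots> = (\<Sum>b\<in>Basis. (\<integral>\<omega>. (Z \<omega> \<bullet> b) * (Gi \<omega> \<bullet> b) \<partial>M))"
    by (rule Bochner_Integration.integral_sum) (use ib[OF Gl] in \<open>simp add: mult.commute\<close>)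
  also have "\<dots> = (\<Sum>b\<in>Basis. (\<integral>\<omega>. (Z \<omega> \<bullet> b) * (gi \<omega> \<bullet> b) \<partial>M))"
  proof (rule sum.cong[OF refl])
    fix b :: 'v assume b: "b \<in> Basis"
    show "(\<integral>\<omega>. (Z \<omega> \<bullet> b) * (Gi \<omega> \<bullet> b) \<partial>M) = (\<integral>\<omega>. (Z \<omega> \<bullet> b) * (gi \<omega> \<bullet> b) \<partial>M)"
      by (rule unbiased_comp[OF P S Gl gl _ _ b unb[OF b]])
         (auto intro!: l2_inner_unit Zl simp: b)
  qed
  also have "\<dots> = (\<integral>\<omega>. (\<Sum>b\<in>Basis. (Z \<omega> \<bullet> b) * (gi \<omega> \<bullet> b)) \<partial>M)"
    by (rule Bochner_Integration.integral_sum[symmetric]) (use ib[OF gl] in \<open>simp add: mult.commute\<close>)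
  also have "\<dots> = (\<integral>\<omega>. Z \<omega> \<bullet> gi \<omega> \<partial>M)"
    by (simp add: euclidean_inner[of "Z _" "gi _"])
  finally show ?thesis .
qed

lemma cross_zero:
  fixes Gi gi Gj gj :: "'a \<Rightarrow> 'v::euclidean_space"
  assumes P: "prob_space M" and S: "subalgebra M F"
    and Gil: "l2 M Gi" and gil: "l2 M gi" and Gjl: "l2 M Gj" and gjl: "l2 M gj"
    and giF[measurable]: "gi \<in> borel_measurable F" and gjF[measurable]: "gj \<in> borel_measurable F"
    and unbi: "\<And>b. b \<in> Basis \<Longrightarrow> AE \<omega> in M. real_cond_exp M F (\<lambda>\<omega>. Gi \<omega> \<bullet> b) \<omega> = gi \<omega> \<bullet> b"
    and unbj: "\<And>b. b \<in> Basis \<Longrightarrow> AE \<omega> in M. real_cond_exp M F (\<lambda>\<omega>. Gj \<omega> \<bullet> b) \<omega> = gj \<omega> \<bullet> b"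
    and CI: "\<And>A B. A \<in> sets borel \<Longrightarrow> B \<in> sets borel \<Longrightarrow>
       AE \<omega> in M. real_cond_exp M F (\<lambda>\<omega>. indicator A (Gi \<omega>) * indicator B (Gj \<omega>)) \<omega>
         = real_cond_exp M F (\<lambda>\<omega>. indicator A (Gi \<omega>)) \<omega> * real_cond_exp M F (\<lambda>\<omega>. indicator B (Gj \<omega>)) \<omega>"
  shows "(\<integral>\<omega>. (Gi \<omega> - gi \<omega>) \<bullet> (Gj \<omega> - gj \<omega>) \<partial>M) = 0"
proof -
  have [measurable]: "Gi \<in> borel_measurable M" "Gj \<in> borel_measurable M" using Gil Gjl unfolding l2_def by auto
  have lb: "l2 M (\<lambda>\<omega>. A \<omega> \<bullet> b)" if "l2 M A" "b \<in> Basis" for A :: "'a \<Rightarrow> 'v" and b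
    by (rule l2_inner_unit[OF that(1)]) (simp add: that)
  have comp: "(\<integral>\<omega>. ((Gi \<omega> - gi \<omega>) \<bullet> b) * ((Gj \<omega> - gj \<omega>) \<bullet> b) \<partial>M) = 0" if b: "b \<in> Basis" for b
  proof -
    have gbF: "(\<lambda>\<omega>. gi \<omega> \<bullet> b) \<in> borel_measurable F" "(\<lambda>\<omega>. gj \<omega> \<bullet> b) \<in> borel_measurable F" by measurable
    have e1: "(\<integral>\<omega>. (Gi \<omega> \<bullet> b) * (Gj \<omega> \<bullet> b) \<partial>M) = (\<integral>\<omega>. (Gi \<omega> \<bullet> b) * (gj \<omega> \<bullet> b) \<partial>M)"
      by (rule ci_core[OF P S _ _ CI, where h="\<lambda>u. u \<bullet> b" and k="\<lambda>u. u \<bullet> b"])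
         (auto intro!: lb Gil Gjl gjl b unbj[OF b] gbF)
    have e2: "(\<integral>\<omega>. (Gi \<omega> \<bullet> b) * (gj \<omega> \<bullet> b) \<partial>M) = (\<integral>\<omega>. (gi \<omega> \<bullet> b) * (gj \<omega> \<bullet> b) \<partial>M)"
      using unbiased_comp[OF P S Gil gil lb[OF gjl b] gbF(2) b unbi[OF b]] by (simp add: mult.commute)
    have e3: "(\<integral>\<omega>. (gi \<omega> \<bullet> b) * (Gj \<omega> \<bullet> b) \<partial>M) = (\<integral>\<omega>. (gi \<omega> \<bullet> b) * (gj \<omega> \<bullet> b) \<partial>M)"
      using unbiased_comp[OF P S Gjl gjl lb[OF gil b] gbF(1) b unbj[OF b]] .
    have i: "integrable M (\<lambda>\<omega>. (A \<omega> \<bullet> b) * (B \<omega> \<bullet> b))" if "l2 M A" "l2 M B" for A B :: "'a \<Rightarrow> 'v"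
      by (intro l2_real_mult_int lb that b)
    have "(\<integral>\<omega>. ((Gi \<omega> - gi \<omega>) \<bullet> b) * ((Gj \<omega> - gj \<omega>) \<bullet> b) \<partial>M)
      = (\<integral>\<omega>. ((Gi \<omega> \<bullet> b) * (Gj \<omega> \<bullet> b) - (Gi \<omega> \<bullet> b) * (gj \<omega> \<bullet> b))
             - ((gi \<omega> \<bullet> b) * (Gj \<omega> \<bullet> b) - (gi \<omega> \<bullet> b) * (gj \<omega> \<bullet> b)) \<partial>M)"
      by (simp add: inner_diff_left algebra_simps)
    also have "\<dots> = ((\<integral>\<omega>. (Gi \<omega> \<bullet> b) * (Gj \<omega> \<bullet> b) \<partial>M) - (\<integral>\<omega>. (Gi \<omega> \<bullet> b) * (gj \<omega> \<bullet> b) \<partial>M))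
        - ((\<integral>\<omega>. (gi \<omega> \<bullet> b) * (Gj \<omega> \<bullet> b) \<partial>M) - (\<integral>\<omega>. (gi \<omega> \<bullet> b) * (gj \<omega> \<bullet> b) \<partial>M))"
      using i[OF Gil Gjl] i[OF Gil gjl] i[OF gil Gjl] i[OF gil gjl]
      by (simp add: Bochner_Integration.integral_diff)
    also have "\<dots> = 0" using e1 e2 e3 by simp
    finally show ?thesis .
  qed
  have "(\<integral>\<omega>. (Gi \<omega> - gi \<omega>) \<bullet> (Gj \<omega> - gj \<omega>) \<partial>M)
      = (\<integral>\<omega>. (\<Sum>b\<in>Basis. ((Gi \<omega> - gi \<omega>) \<bullet> b) * ((Gj \<omega> - gj \<omega>) \<bullet> b)) \<partial>M)"
    by (simp add: euclidean_inner[of "Gi _ - gi _" "Gj _ - gj _"])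
  also have "\<dots> = (\<Sum>b\<in>Basis. (\<integral>\<omega>. ((Gi \<omega> - gi \<omega>) \<bullet> b) * ((Gj \<omega> - gj \<omega>) \<bullet> b) \<partial>M))"
    by (rule Bochner_Integration.integral_sum) (auto intro!: l2_real_mult_int lb l2_diff Gil gil Gjl gjl)
  also have "\<dots> = 0" by (simp add: comp)
  finally show ?thesis .
qed



lemma sum_var:
  fixes D :: "nat \<Rightarrow> 'a \<Rightarrow> 'v::euclidean_space"
  assumes fin: "finite K" and Dl: "\<And>i. i \<in> K \<Longrightarrow> l2 M (D i)"
    and cross: "\<And>i j. i \<in> K \<Longrightarrow> j \<in> K \<Longrightarrow> i \<noteq> j \<Longrightarrow> (\<integral>\<omega>. D i \<omega> \<bullet> D j \<omega> \<partial>M) = 0"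
  shows "(\<integral>\<omega>. (norm (\<Sum>i\<in>K. D i \<omega>))\<^sup>2 \<partial>M) = (\<Sum>i\<in>K. (\<integral>\<omega>. (norm (D i \<omega>))\<^sup>2 \<partial>M))"
proof -
  have ii: "integrable M (\<lambda>\<omega>. D i \<omega> \<bullet> D j \<omega>)" if "i \<in> K" "j \<in> K" for i j
    by (rule l2_inner_int) (use Dl that in auto)
  have "(\<integral>\<omega>. (norm (\<Sum>i\<in>K. D i \<omega>))\<^sup>2 \<partial>M) = (\<integral>\<omega>. (\<Sum>i\<in>K. \<Sum>j\<in>K. D i \<omega> \<bullet> D j \<omega>) \<partial>M)"
    by (simp add: power2_norm_eq_inner inner_sum_left inner_sum_right) (subst sum.swap, rule refl)
  also have "\<dots> = (\<Sum>i\<in>K. \<integral>\<omega>. (\<Sum>j\<in>K. D i \<omega> \<bullet> D j \<omega>) \<partial>M)"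
    by (rule Bochner_Integration.integral_sum) (auto intro!: Bochner_Integration.integrable_sum ii)
  also have "\<dots> = (\<Sum>i\<in>K. \<Sum>j\<in>K. \<integral>\<omega>. D i \<omega> \<bullet> D j \<omega> \<partial>M)"
    by (intro sum.cong refl Bochner_Integration.integral_sum) (auto intro!: ii)
  also have "\<dots> = (\<Sum>i\<in>K. \<integral>\<omega>. D i \<omega> \<bullet> D i \<omega> \<partial>M)"
  proof (rule sum.cong[OF refl])
    fix i assume i: "i \<in> K"
    have "(\<Sum>j\<in>K. \<integral>\<omega>. D i \<omega> \<bullet> D j \<omega> \<partial>M) = (\<integral>\<omega>. D i \<omega> \<bullet> D i \<omega> \<partial>M) + (\<Sum>j\<in>K-{i}. \<integral>\<omega>. D i \<omega> \<bullet> D j \<omega> \<partial>M)"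
      by (rule sum.remove[OF fin i])
    also have "(\<Sum>j\<in>K-{i}. \<integral>\<omega>. D i \<omega> \<bullet> D j \<omega> \<partial>M) = 0"
      by (rule sum.neutral) (use cross i in auto)
    finally show "(\<Sum>j\<in>K. \<integral>\<omega>. D i \<omega> \<bullet> D j \<omega> \<partial>M) = (\<integral>\<omega>. D i \<omega> \<bullet> D i \<omega> \<partial>M)" by simp
  qed
  also have "\<dots> = (\<Sum>i\<in>K. (\<integral>\<omega>. (norm (D i \<omega>))\<^sup>2 \<partial>M))"
    by (simp add: power2_norm_eq_inner)
  finally show ?thesis .
qed

lemma ci2_from:
  fixes G :: "nat \<Rightarrow> 'a \<Rightarrow> 'v::euclidean_space"
  assumes P: "prob_space M" and S: "subalgebra M F"
    and CI: "cond_indep_vars M F K G" and fin: "finite K"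
    and i: "i \<in> K" and j: "j \<in> K" and ij: "i \<noteq> j"
    and A: "A \<in> sets borel" and B: "B \<in> sets borel"
  shows "AE \<omega> in M. real_cond_exp M F (\<lambda>\<omega>. indicator A (G i \<omega>) * indicator B (G j \<omega>)) \<omega>
         = real_cond_exp M F (\<lambda>\<omega>. indicator A (G i \<omega>)) \<omega> * real_cond_exp M F (\<lambda>\<omega>. indicator B (G j \<omega>)) \<omega>"
proof -
  interpret prob_space M by fact
  interpret sigma_finite_subalgebra M F using sfs_of_prob[OF P S] .
  define Af where "Af = (\<lambda>l. if l = i then A else if l = j then B else UNIV)"
  have Afb: "\<forall>l\<in>K. Af l \<in> sets borel" using A B by (auto simp: Af_def)
  have H: "AE \<omega> in M. real_cond_exp M F (\<lambda>\<omega>. \<Prod>l\<in>K. indicator (Af l) (G l \<omega>)) \<omega>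
                   = (\<Prod>l\<in>K. real_cond_exp M F (\<lambda>\<omega>. indicator (Af l) (G l \<omega>)) \<omega>)"
    using CI Afb unfolding cond_indep_vars_def by blast
  have one: "AE \<omega> in M. real_cond_exp M F (\<lambda>\<omega>. 1) \<omega> = 1"
    by (rule real_cond_exp_F_meas) auto
  have Kij: "K = insert i (insert j (K - {i, j}))" using i j by auto
  have fin2: "finite (K - {i, j})" using fin by auto
  have prodsplit: "(\<Prod>l\<in>K. h l) = h i * (h j * (\<Prod>l\<in>K - {i, j}. h l))" for h :: "nat \<Rightarrow> real"
    by (subst Kij) (use fin2 ij in auto)
  have lhs: "(\<lambda>\<omega>. \<Prod>l\<in>K. indicator (Af l) (G l \<omega>) :: real) = (\<lambda>\<omega>. indicator A (G i \<omega>) * indicator B (G j \<omega>))"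
  proof
    fix \<omega>
    have "(\<Prod>l\<in>K - {i, j}. indicator (Af l) (G l \<omega>) :: real) = 1"
      by (rule prod.neutral) (auto simp: Af_def)
    then show "(\<Prod>l\<in>K. indicator (Af l) (G l \<omega>) :: real) = indicator A (G i \<omega>) * indicator B (G j \<omega>)"
      using ij by (simp add: prodsplit Af_def)
  qed
  show ?thesis
    using H one
  proof eventually_elim
    case (elim \<omega>)
    have "(\<Prod>l\<in>K - {i, j}. real_cond_exp M F (\<lambda>\<omega>. indicator (Af l) (G l \<omega>)) \<omega>) = 1"
      by (rule prod.neutral) (auto simp: Af_def elim(2))
    then show ?case using elim(1) ij unfolding lhs by (simp add: prodsplit Af_def)
  qed
qed



lemma final_arith:
  fixes \<alpha> L p k Egr s B2 EF0 EF1 T Q :: real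
  assumes a: "0 < \<alpha>" and L: "0 < L" and La: "L * \<alpha> \<le> 1/8" and p: "0 < p"
    and k1: "p / 2 \<le> k" and k2: "k \<le> p" and E: "0 \<le> Egr" and s: "0 \<le> s" and B: "0 \<le> B2"
    and main: "EF1 \<le> EF0 - (\<alpha>/p) * T + L/2 * (\<alpha>/p)\<^sup>2 * Q"
    and T: "k * (Egr/2 - L\<^sup>2 * \<alpha>\<^sup>2 * B2 / 2) \<le> T"
    and Q: "Q \<le> k * s + 2 * k\<^sup>2 * Egr + 2 * k\<^sup>2 * L\<^sup>2 * \<alpha>\<^sup>2 * B2"
  shows "EF1 \<le> EF0 - \<alpha> / 8 * Egr + \<alpha>^3 * B2 * L\<^sup>2 / 2 + L * \<alpha>\<^sup>2 * s / p + 2 * L^3 * \<alpha>^4 * B2"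
proof -
  define r where "r = k / p"
  have r1: "1/2 \<le> r" and r2: "r \<le> 1" using k1 k2 p by (auto simp: r_def field_simps)
  have kr: "k = r * p" using p by (simp add: r_def)
  have sa: "(\<alpha>/p) * T \<ge> (\<alpha>/p) * (k * (Egr/2 - L\<^sup>2 * \<alpha>\<^sup>2 * B2 / 2))"
    using T a p by (intro mult_left_mono) auto
  have sb: "L/2 * (\<alpha>/p)\<^sup>2 * Q \<le> L/2 * (\<alpha>/p)\<^sup>2 * (k * s + 2 * k\<^sup>2 * Egr + 2 * k\<^sup>2 * L\<^sup>2 * \<alpha>\<^sup>2 * B2)"
    using Q L by (intro mult_left_mono) auto
  have e1: "(\<alpha>/p) * (k * (Egr/2 - L\<^sup>2 * \<alpha>\<^sup>2 * B2 / 2)) = \<alpha> * r * Egr / 2 - \<alpha> * r * L\<^sup>2 * \<alpha>\<^sup>2 * B2 / 2"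
    using p by (simp add: kr field_simps)
  have e2: "L/2 * (\<alpha>/p)\<^sup>2 * (k * s + 2 * k\<^sup>2 * Egr + 2 * k\<^sup>2 * L\<^sup>2 * \<alpha>\<^sup>2 * B2)
      = L/2 * \<alpha>\<^sup>2 * r * s / p + (L * \<alpha> * r) * (\<alpha> * r * Egr) + L * \<alpha>\<^sup>2 * r\<^sup>2 * L\<^sup>2 * \<alpha>\<^sup>2 * B2"
    using p by (simp add: kr field_simps power2_eq_square)
  have b1: "(L * \<alpha> * r) * (\<alpha> * r * Egr) \<le> (1/8) * (\<alpha> * r * Egr)"
  proof (rule mult_right_mono)
    show "L * \<alpha> * r \<le> 1/8" using La r2 mult_left_le[of r "L * \<alpha>"] r1 L a
      by (smt (verit) mult_nonneg_nonneg)
    show "0 \<le> \<alpha> * r * Egr" using a r1 E by simp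
  qed
  have b2: "\<alpha> * Egr / 2 \<le> \<alpha> * r * Egr"
  proof -
    have "\<alpha> * Egr * (1/2) \<le> \<alpha> * Egr * r" using r1 a E by (intro mult_left_mono) auto
    then show ?thesis by (simp add: algebra_simps)
  qed
  have b3: "\<alpha> * r * L\<^sup>2 * \<alpha>\<^sup>2 * B2 \<le> \<alpha> * L\<^sup>2 * \<alpha>\<^sup>2 * B2"
  proof -
    have "(\<alpha> * L\<^sup>2 * \<alpha>\<^sup>2 * B2) * r \<le> (\<alpha> * L\<^sup>2 * \<alpha>\<^sup>2 * B2) * 1" using r2 a B by (intro mult_left_mono) auto
    then show ?thesis by (simp add: algebra_simps)
  qed
  have b4: "L/2 * \<alpha>\<^sup>2 * r * s / p \<le> L * \<alpha>\<^sup>2 * s / p"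
  proof -
    have "(L * \<alpha>\<^sup>2 * s / p) * (r/2) \<le> (L * \<alpha>\<^sup>2 * s / p) * 1" using r2 r1 L s p by (intro mult_left_mono) auto
    then show ?thesis by (simp add: algebra_simps)
  qed
  have b5: "L * \<alpha>\<^sup>2 * r\<^sup>2 * L\<^sup>2 * \<alpha>\<^sup>2 * B2 \<le> 2 * L^3 * \<alpha>^4 * B2"
  proof -
    have "r\<^sup>2 \<le> 1" using r1 r2 by (simp add: abs_le_square_iff power_le_one)
    then have "(L^3 * \<alpha>^4 * B2) * r\<^sup>2 \<le> (L^3 * \<alpha>^4 * B2) * 2" using L a B by (intro mult_left_mono) auto
    then show ?thesis by (simp add: algebra_simps power2_eq_square power3_eq_cube power4_eq_xxxx)
  qed
  have "\<alpha>^3 * B2 * L\<^sup>2 / 2 = \<alpha> * L\<^sup>2 * \<alpha>\<^sup>2 * B2 / 2" by (simp add: power2_eq_square power3_eq_cube)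
  moreover have "\<alpha> / 8 * Egr = \<alpha> * Egr / 8" by simp
  moreover have "0 \<le> \<alpha> * Egr" using a E by simp
  ultimately show ?thesis using main sa sb e1 e2 b1 b2 b3 b4 b5 by linarith
qed



lemma l2_cong: "l2 M A \<Longrightarrow> (\<And>\<omega>. \<omega> \<in> space M \<Longrightarrow> B \<omega> = A \<omega>) \<Longrightarrow> l2 M B"
  unfolding l2_def
  by (metis (no_types, lifting) Bochner_Integration.integrable_cong measurable_cong)

lemma l2_const_prob: "prob_space M \<Longrightarrow> l2 M (\<lambda>\<omega>. c)"
  by (rule l2_const) (simp add: prob_space_def)

lemma l2_cmult: "l2 M (a :: _ \<Rightarrow> real) \<Longrightarrow> l2 M (\<lambda>\<omega>. c * a \<omega>)"
  using l2_scaleR[of M a c] by simp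

lemma l2_norm: "l2 M A \<Longrightarrow> l2 M (\<lambda>\<omega>. norm (A \<omega>))"
  by (rule l2_bound) (auto simp: l2_def)

lemma grad_bound:
  assumes lip: "L-lipschitz_on UNIV grad"
  shows "norm (grad y) \<le> norm (grad 0) + L * norm y"
proof -
  have "norm (grad y - grad 0) \<le> L * norm (y - 0)" by (rule lipschitz_on_normD[OF lip]) auto
  then show ?thesis using norm_triangle_ineq2[of "grad y" "grad 0"] by simp
qed

lemma l2_grad:
  fixes grad :: "'v::euclidean_space \<Rightarrow> 'v"
  assumes P: "prob_space M" and lip: "L-lipschitz_on UNIV grad" and Y: "l2 M Y"
  shows "l2 M (\<lambda>\<omega>. grad (Y \<omega>))"
proof -
  have [measurable]: "grad \<in> borel_measurable borel"
    by (rule borel_measurable_continuous_onI[OF lipschitz_on_continuous_on[OF lip]])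
  have [measurable]: "Y \<in> borel_measurable M" using Y by (simp add: l2_def)
  have L0: "0 \<le> L" using lipschitz_on_nonneg[OF lip] .
  have a: "l2 M (\<lambda>\<omega>. norm (grad 0) + L * norm (Y \<omega>))"
    by (intro l2_add l2_const_prob[OF P] l2_cmult l2_norm Y)
  show ?thesis
  proof (rule l2_bound[OF a])
    fix \<omega>
    have "norm (grad (Y \<omega>)) \<le> norm (grad 0) + L * norm (Y \<omega>)" by (rule grad_bound[OF lip])
    then show "norm (grad (Y \<omega>)) \<le> norm (norm (grad 0) + L * norm (Y \<omega>))" by simp
  qed measurable
qed

lemma inner_lb: "(norm a)\<^sup>2 / 2 - (norm (a - b))\<^sup>2 / 2 \<le> a \<bullet> (b::'v::real_inner)"
proof -
  have "(norm (a - b))\<^sup>2 = (norm a)\<^sup>2 - 2 * (a \<bullet> b) + (norm b)\<^sup>2"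
    by (simp add: power2_norm_eq_inner inner_diff_left inner_diff_right inner_commute)
  moreover have "0 \<le> (norm b)\<^sup>2" by simp
  ultimately show ?thesis by linarith
qed

lemma f_bound:
  fixes f :: "'v::euclidean_space \<Rightarrow> real" and grad :: "'v \<Rightarrow> 'v"
  assumes deriv: "\<And>y. (f has_derivative (\<lambda>h. grad y \<bullet> h)) (at y)"
    and lip: "L-lipschitz_on UNIV grad"
  shows "\<bar>f y\<bar> \<le> \<bar>f 0\<bar> + norm (grad 0) + (norm (grad 0) + 2 * L) * (norm y)\<^sup>2"
proof -
  have L0: "0 \<le> L" using lipschitz_on_nonneg[OF lip] .
  have up: "f y \<le> f 0 + grad 0 \<bullet> y + L / 2 * (norm y)\<^sup>2" using descent[OF deriv lip, of y 0] by simp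
  have lo0: "f 0 \<le> f y + grad y \<bullet> (0 - y) + L / 2 * (norm (0 - y))\<^sup>2" using descent[OF deriv lip, of 0 y] .
  have lo: "f 0 - grad y \<bullet> (0 - y) - L / 2 * (norm y)\<^sup>2 \<le> f y" using lo0 by simp
  have c1: "\<bar>grad 0 \<bullet> y\<bar> \<le> norm (grad 0) * norm y" by (rule Cauchy_Schwarz_ineq2)
  have c2: "\<bar>grad y \<bullet> (0 - y)\<bar> \<le> norm (grad y) * norm y" using Cauchy_Schwarz_ineq2[of "grad y" "0 - y"] by simp
  have c3: "norm (grad y) * norm y \<le> (norm (grad 0) + L * norm y) * norm y"
    by (rule mult_right_mono[OF grad_bound[OF lip]]) simp
  have c4: "norm (grad 0) * norm y \<le> norm (grad 0) * (1 + (norm y)\<^sup>2)"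
    by (rule mult_left_mono[OF le_one_plus_sq]) simp
  have e: "(norm (grad 0) + L * norm y) * norm y = norm (grad 0) * norm y + L * (norm y)\<^sup>2"
    by (simp add: algebra_simps power2_eq_square)
  have e2: "norm (grad 0) * (1 + (norm y)\<^sup>2) = norm (grad 0) + norm (grad 0) * (norm y)\<^sup>2"
    by (simp add: algebra_simps)
  have e3: "(norm (grad 0) + 2 * L) * (norm y)\<^sup>2 = norm (grad 0) * (norm y)\<^sup>2 + 2 * (L * (norm y)\<^sup>2)"
    by (simp add: algebra_simps)
  have p: "0 \<le> L * (norm y)\<^sup>2" using L0 by simp
  have "L / 2 * (norm y)\<^sup>2 = (L * (norm y)\<^sup>2) / 2" by simp
  moreover have "f 0 \<le> \<bar>f 0\<bar>" "- \<bar>f 0\<bar> \<le> f 0" by simp_all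
  moreover have "grad 0 \<bullet> y \<le> \<bar>grad 0 \<bullet> y\<bar>" "- \<bar>grad y \<bullet> (0 - y)\<bar> \<le> grad y \<bullet> (0 - y)"
    "grad y \<bullet> (0 - y) \<le> \<bar>grad y \<bullet> (0 - y)\<bar>" by simp_all
  ultimately have A: "f y \<le> \<bar>f 0\<bar> + norm (grad 0) + (norm (grad 0) + 2 * L) * (norm y)\<^sup>2"
    and B: "- f y \<le> \<bar>f 0\<bar> + norm (grad 0) + (norm (grad 0) + 2 * L) * (norm y)\<^sup>2"
    using up lo c1 c2 c3 c4 e e2 e3 p by linarith+
  then show ?thesis by (rule abs_leI)
qed

lemma f_int:
  fixes f :: "'v::euclidean_space \<Rightarrow> real" and grad :: "'v \<Rightarrow> 'v"
  assumes P: "prob_space M" and deriv: "\<And>y. (f has_derivative (\<lambda>h. grad y \<bullet> h)) (at y)"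
    and lip: "L-lipschitz_on UNIV grad" and Y: "l2 M Y"
  shows "integrable M (\<lambda>\<omega>. f (Y \<omega>))"
proof -
  interpret prob_space M by fact
  have [measurable]: "f \<in> borel_measurable borel"
    by (rule borel_measurable_continuous_onI) (rule has_derivative_continuous_on[OF deriv])
  have [measurable]: "Y \<in> borel_measurable M" and i: "integrable M (\<lambda>\<omega>. (norm (Y \<omega>))\<^sup>2)"
    using Y by (auto simp: l2_def)
  show ?thesis
  proof (rule Bochner_Integration.integrable_bound[where f="\<lambda>\<omega>. \<bar>f 0\<bar> + norm (grad 0) + (norm (grad 0) + 2 * L) * (norm (Y \<omega>))\<^sup>2"])
    show "integrable M (\<lambda>\<omega>. \<bar>f 0\<bar> + norm (grad 0) + (norm (grad 0) + 2 * L) * (norm (Y \<omega>))\<^sup>2)"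
      using i by simp
    show "AE \<omega> in M. norm (f (Y \<omega>)) \<le> norm (\<bar>f 0\<bar> + norm (grad 0) + (norm (grad 0) + 2 * L) * (norm (Y \<omega>))\<^sup>2)"
    proof (intro AE_I2)
      fix \<omega>
      have "\<bar>f (Y \<omega>)\<bar> \<le> \<bar>f 0\<bar> + norm (grad 0) + (norm (grad 0) + 2 * L) * (norm (Y \<omega>))\<^sup>2"
        by (rule f_bound[OF deriv lip])
      also have "\<dots> \<le> \<bar>\<bar>f 0\<bar> + norm (grad 0) + (norm (grad 0) + 2 * L) * (norm (Y \<omega>))\<^sup>2\<bar>" by (rule abs_ge_self)
      finally show "norm (f (Y \<omega>)) \<le> norm (\<bar>f 0\<bar> + norm (grad 0) + (norm (grad 0) + 2 * L) * (norm (Y \<omega>))\<^sup>2)" by simp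
    qed
  qed measurable
qed



theorem mainTheorem5:
  fixes M :: "'a measure" and F :: "nat \<Rightarrow> 'a measure"
    and f :: "'v::euclidean_space \<Rightarrow> real" and grad :: "'v \<Rightarrow> 'v"
    and L \<alpha> B \<sigma> :: real and p :: nat and I :: "nat \<Rightarrow> nat set"
    and x0 :: 'v and x :: "nat \<Rightarrow> 'a \<Rightarrow> 'v"
    and v :: "nat \<Rightarrow> nat \<Rightarrow> 'a \<Rightarrow> 'v" and G :: "nat \<Rightarrow> nat \<Rightarrow> 'a \<Rightarrow> 'v"
    and t :: nat
  assumes prob: "prob_space M"
    and filt_sub: "\<And>s. subalgebra M (F s)"
    and filt_mono: "\<And>s. sets (F s) \<subseteq> sets (F (Suc s))"
    and deriv: "\<And>y. (f has_derivative (\<lambda>h. grad y \<bullet> h)) (at y)"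
    and lip: "L-lipschitz_on UNIV grad"
    and p_pos: "p \<ge> 1"
    and I_sub: "\<And>s. I s \<subseteq> {1..p}"
    and I_card: "\<And>s. real p / 2 \<le> real (card (I s))"
    and x_init: "x 0 = (\<lambda>\<omega>. x0)"
    and x_meas: "\<And>s. x s \<in> borel_measurable (F s)"
    and v_meas: "\<And>s i. i \<in> I s \<Longrightarrow> v s i \<in> borel_measurable (F s)"
    and G_meas: "\<And>s i. i \<in> I s \<Longrightarrow> G s i \<in> borel_measurable (F (Suc s))"
    and G_sq_int: "\<And>s i. i \<in> I s \<Longrightarrow> integrable M (\<lambda>\<omega>. (norm (G s i \<omega>))\<^sup>2)"
    and G_indep: "\<And>s. cond_indep_vars M (F s) (I s) (G s)"
    and G_unbiased: "\<And>s i b. i \<in> I s \<Longrightarrow> b \<in> Basis \<Longrightarrow>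
         AE \<omega> in M. real_cond_exp M (F s) (\<lambda>\<omega>. G s i \<omega> \<bullet> b) \<omega> = grad (v s i \<omega>) \<bullet> b"
    and G_var: "\<And>s i. i \<in> I s \<Longrightarrow>
         AE \<omega> in M. real_cond_exp M (F s) (\<lambda>\<omega>. (norm (G s i \<omega> - grad (v s i \<omega>)))\<^sup>2) \<omega> \<le> \<sigma>\<^sup>2"
    and update: "\<And>s \<omega>. \<omega> \<in> space M \<Longrightarrow>
         x (Suc s) \<omega> = x s \<omega> - (\<alpha> / real p) *\<^sub>R (\<Sum>i\<in>I s. G s i \<omega>)"
    and alpha_pos: "0 < \<alpha>"
    and alpha_le: "\<alpha> \<le> 1 / (8 * L)"
    and B_pos: "0 < B"
    and elastic: "\<And>s i. i \<in> I s \<Longrightarrow>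
         (\<integral>\<^sup>+\<omega>. ennreal ((norm (x s \<omega> - v s i \<omega>))\<^sup>2) \<partial>M) \<le> ennreal (\<alpha>\<^sup>2 * B\<^sup>2)"
  shows "(\<integral>\<omega>. f (x (Suc t) \<omega>) \<partial>M)
         \<le> (\<integral>\<omega>. f (x t \<omega>) \<partial>M) - \<alpha> / 8 * (\<integral>\<omega>. (norm (grad (x t \<omega>)))\<^sup>2 \<partial>M)
           + \<alpha>^3 * B\<^sup>2 * L\<^sup>2 / 2 + L * \<alpha>\<^sup>2 * \<sigma>\<^sup>2 / real p + 2 * L^3 * \<alpha>^4 * B\<^sup>2"
proof -
  interpret prob_space M by (rule prob)
  have L0: "0 \<le> L" using lipschitz_on_nonneg[OF lip] .
  have Lpos: "0 < L"
  proof (rule ccontr)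
    assume "\<not> 0 < L" with L0 have "L = 0" by simp
    with alpha_le alpha_pos show False by simp
  qed
  have La: "L * \<alpha> \<le> 1 / 8"
  proof -
    have "\<alpha> * (8 * L) \<le> 1" using alpha_le Lpos by (simp add: le_divide_eq)
    then show ?thesis by (simp add: algebra_simps)
  qed
  have gradM[measurable]: "grad \<in> borel_measurable borel"
    by (rule borel_measurable_continuous_onI[OF lipschitz_on_continuous_on[OF lip]])
  have fM[measurable]: "f \<in> borel_measurable borel"
    by (rule borel_measurable_continuous_onI) (rule has_derivative_continuous_on[OF deriv])
  have xM[measurable]: "\<And>s. x s \<in> borel_measurable M" using measurable_from_subalg[OF filt_sub x_meas] .
  have vM: "\<And>s i. i \<in> I s \<Longrightarrow> v s i \<in> borel_measurable M" using measurable_from_subalg[OF filt_sub v_meas] by blast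
  have GM: "\<And>s i. i \<in> I s \<Longrightarrow> G s i \<in> borel_measurable M" using measurable_from_subalg[OF filt_sub G_meas] by blast
  have Gl: "\<And>s i. i \<in> I s \<Longrightarrow> l2 M (G s i)" using GM G_sq_int by (simp add: l2_def)
  have xl: "l2 M (x s)" for s
  proof (induction s)
    case 0 show ?case unfolding x_init by (rule l2_const_prob[OF prob])
  next
    case (Suc s)
    have "l2 M (\<lambda>\<omega>. x s \<omega> - (\<alpha> / real p) *\<^sub>R (\<Sum>i\<in>I s. G s i \<omega>))"
      by (intro l2_diff Suc l2_scaleR l2_sum Gl)
    then show ?case by (rule l2_cong) (simp add: update)
  qed
  define K where "K = I t"
  have KI: "K \<subseteq> {1..p}" unfolding K_def by (rule I_sub)
  have finK: "finite K" using KI finite_subset by blast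
  define k where "k = card K"
  have kp: "real k \<le> real p" unfolding k_def using card_mono[OF _ KI] by simp
  have kge: "real p / 2 \<le> real k" using I_card unfolding k_def K_def .
  have pp: "0 < real p" using p_pos by simp
  define X where "X = x t"
  define gr where "gr = (\<lambda>\<omega>. grad (X \<omega>))"
  define g where "g = (\<lambda>i \<omega>. grad (v t i \<omega>))"
  define S where "S = (\<lambda>\<omega>. \<Sum>i\<in>K. G t i \<omega>)"
  define D where "D = (\<lambda>i \<omega>. G t i \<omega> - g i \<omega>)"
  define Sg where "Sg = (\<lambda>\<omega>. \<Sum>i\<in>K. g i \<omega>)"
  define SD where "SD = (\<lambda>\<omega>. \<Sum>i\<in>K. D i \<omega>)"
  have XM[measurable]: "X \<in> borel_measurable M" unfolding X_def by simp
  have XF[measurable]: "X \<in> borel_measurable (F t)" unfolding X_def by (rule x_meas)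
  have Xl: "l2 M X" unfolding X_def by (rule xl)
  have grl: "l2 M gr" unfolding gr_def by (rule l2_grad[OF prob lip Xl])
  have grF: "gr \<in> borel_measurable (F t)" unfolding gr_def by measurable
  have GKl: "\<And>i. i \<in> K \<Longrightarrow> l2 M (G t i)" unfolding K_def by (rule Gl)
  have el: "l2 M (\<lambda>\<omega>. X \<omega> - v t i \<omega>) \<and> (\<integral>\<omega>. (norm (X \<omega> - v t i \<omega>))\<^sup>2 \<partial>M) \<le> \<alpha>\<^sup>2 * B\<^sup>2"
    if i: "i \<in> K" for i
  proof -
    have [measurable]: "v t i \<in> borel_measurable M" using vM i unfolding K_def by blast
    have nn: "(\<integral>\<^sup>+\<omega>. ennreal ((norm (X \<omega> - v t i \<omega>))\<^sup>2) \<partial>M) \<le> ennreal (\<alpha>\<^sup>2 * B\<^sup>2)"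
      using elastic[of i t] i unfolding K_def X_def by simp
    have int: "integrable M (\<lambda>\<omega>. (norm (X \<omega> - v t i \<omega>))\<^sup>2)"
    proof (rule integrableI_nonneg)
      show "(\<integral>\<^sup>+\<omega>. ennreal ((norm (X \<omega> - v t i \<omega>))\<^sup>2) \<partial>M) < \<infinity>"
        using nn by (simp add: le_less_trans)
    qed auto
    have "ennreal (\<integral>\<omega>. (norm (X \<omega> - v t i \<omega>))\<^sup>2 \<partial>M) = (\<integral>\<^sup>+\<omega>. ennreal ((norm (X \<omega> - v t i \<omega>))\<^sup>2) \<partial>M)"
      by (rule nn_integral_eq_integral[OF int, symmetric]) auto
    with nn have "ennreal (\<integral>\<omega>. (norm (X \<omega> - v t i \<omega>))\<^sup>2 \<partial>M) \<le> ennreal (\<alpha>\<^sup>2 * B\<^sup>2)" by simp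
    then have "(\<integral>\<omega>. (norm (X \<omega> - v t i \<omega>))\<^sup>2 \<partial>M) \<le> \<alpha>\<^sup>2 * B\<^sup>2"
      by (simp add: ennreal_le_iff)
    with int show ?thesis by (simp add: l2_def)
  qed
  have vl: "l2 M (v t i)" if "i \<in> K" for i
  proof -
    have "l2 M (\<lambda>\<omega>. X \<omega> - (X \<omega> - v t i \<omega>))" using l2_diff[OF Xl conjunct1[OF el[OF that]]] .
    then show ?thesis by (rule l2_cong) simp
  qed
  have gl: "l2 M (g i)" if "i \<in> K" for i
    unfolding g_def by (rule l2_grad[OF prob lip vl[OF that]])
  have gF: "g i \<in> borel_measurable (F t)" if "i \<in> K" for i
  proof -
    have [measurable]: "v t i \<in> borel_measurable (F t)" using v_meas that unfolding K_def by blast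
    show ?thesis unfolding g_def by measurable
  qed
  have Dl: "l2 M (D i)" if "i \<in> K" for i unfolding D_def by (intro l2_diff GKl gl that)
  have Sl: "l2 M S" unfolding S_def by (intro l2_sum GKl)
  have Sgl: "l2 M Sg" unfolding Sg_def by (intro l2_sum gl)
  have SDl: "l2 M SD" unfolding SD_def by (intro l2_sum Dl)
  have SgF: "Sg \<in> borel_measurable (F t)" unfolding Sg_def
    by (rule borel_measurable_sum) (rule gF)
  have unb: "\<And>b. b \<in> Basis \<Longrightarrow> AE \<omega> in M. real_cond_exp M (F t) (\<lambda>\<omega>. G t i \<omega> \<bullet> b) \<omega> = g i \<omega> \<bullet> b"
    if "i \<in> K" for i
    using G_unbiased that unfolding K_def g_def by blast
  have pw: "f (x (Suc t) \<omega>) \<le> f (X \<omega>) - (\<alpha> / real p) * (gr \<omega> \<bullet> S \<omega>) + L / 2 * (\<alpha> / real p)\<^sup>2 * (norm (S \<omega>))\<^sup>2"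
    if "\<omega> \<in> space M" for \<omega>
  proof -
    have xs: "x (Suc t) \<omega> = X \<omega> - (\<alpha> / real p) *\<^sub>R S \<omega>" using update[OF that] unfolding X_def S_def K_def .
    have "f (x (Suc t) \<omega>) \<le> f (X \<omega>) + grad (X \<omega>) \<bullet> (x (Suc t) \<omega> - X \<omega>) + L / 2 * (norm (x (Suc t) \<omega> - X \<omega>))\<^sup>2"
      by (rule descent[OF deriv lip])
    also have "\<dots> = f (X \<omega>) - (\<alpha> / real p) * (gr \<omega> \<bullet> S \<omega>) + L / 2 * (\<alpha> / real p)\<^sup>2 * (norm (S \<omega>))\<^sup>2"
      using alpha_pos pp by (simp add: xs gr_def power_mult_distrib power_divide)
    finally show ?thesis .
  qed
  have fXi: "integrable M (\<lambda>\<omega>. f (X \<omega>))" by (rule f_int[OF prob deriv lip Xl])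
  have fXni: "integrable M (\<lambda>\<omega>. f (x (Suc t) \<omega>))" by (rule f_int[OF prob deriv lip xl])
  have grSi: "integrable M (\<lambda>\<omega>. gr \<omega> \<bullet> S \<omega>)" by (rule l2_inner_int[OF grl Sl])
  have Ssi: "integrable M (\<lambda>\<omega>. (norm (S \<omega>))\<^sup>2)" using Sl by (simp add: l2_def)
  have main: "(\<integral>\<omega>. f (x (Suc t) \<omega>) \<partial>M) \<le> (\<integral>\<omega>. f (X \<omega>) \<partial>M) - (\<alpha> / real p) * (\<integral>\<omega>. gr \<omega> \<bullet> S \<omega> \<partial>M)
      + L / 2 * (\<alpha> / real p)\<^sup>2 * (\<integral>\<omega>. (norm (S \<omega>))\<^sup>2 \<partial>M)"
  proof -
    have "(\<integral>\<omega>. f (x (Suc t) \<omega>) \<partial>M) \<le> (\<integral>\<omega>. f (X \<omega>) - (\<alpha> / real p) * (gr \<omega> \<bullet> S \<omega>) + L / 2 * (\<alpha> / real p)\<^sup>2 * (norm (S \<omega>))\<^sup>2 \<partial>M)"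
    proof (rule integral_mono)
      show "integrable M (\<lambda>\<omega>. f (X \<omega>) - (\<alpha> / real p) * (gr \<omega> \<bullet> S \<omega>) + L / 2 * (\<alpha> / real p)\<^sup>2 * (norm (S \<omega>))\<^sup>2)"
        by (intro Bochner_Integration.integrable_add Bochner_Integration.integrable_diff
            Bochner_Integration.integrable_mult_right fXi grSi Ssi)
      show "\<And>\<omega>. \<omega> \<in> space M \<Longrightarrow> f (x (Suc t) \<omega>) \<le> f (X \<omega>) - (\<alpha> / real p) * (gr \<omega> \<bullet> S \<omega>) + L / 2 * (\<alpha> / real p)\<^sup>2 * (norm (S \<omega>))\<^sup>2"
        by (rule pw)
    qed (rule fXni)
    also have "\<dots> = (\<integral>\<omega>. f (X \<omega>) \<partial>M) - (\<alpha> / real p) * (\<integral>\<omega>. gr \<omega> \<bullet> S \<omega> \<partial>M)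
      + L / 2 * (\<alpha> / real p)\<^sup>2 * (\<integral>\<omega>. (norm (S \<omega>))\<^sup>2 \<partial>M)"
      using fXi grSi Ssi by simp
    finally show ?thesis .
  qed
  define Egr where "Egr = (\<integral>\<omega>. (norm (gr \<omega>))\<^sup>2 \<partial>M)"
  have Egr0: "0 \<le> Egr" unfolding Egr_def by simp
  have Egr_eq: "(\<integral>\<omega>. (norm (grad (x t \<omega>)))\<^sup>2 \<partial>M) = Egr" unfolding Egr_def gr_def X_def ..
  have Tb: "real k * (Egr / 2 - L\<^sup>2 * \<alpha>\<^sup>2 * B\<^sup>2 / 2) \<le> (\<integral>\<omega>. gr \<omega> \<bullet> S \<omega> \<partial>M)"
  proof -
    have "(\<integral>\<omega>. gr \<omega> \<bullet> S \<omega> \<partial>M) = (\<Sum>i\<in>K. \<integral>\<omega>. gr \<omega> \<bullet> G t i \<omega> \<partial>M)"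
      unfolding S_def inner_sum_right
      by (rule Bochner_Integration.integral_sum) (auto intro!: l2_inner_int grl GKl)
    also have "\<dots> = (\<Sum>i\<in>K. \<integral>\<omega>. gr \<omega> \<bullet> g i \<omega> \<partial>M)"
      by (intro sum.cong refl unbiased_vec[OF prob filt_sub GKl gl grl grF unb])
    also have "\<dots> \<ge> (\<Sum>i\<in>K. Egr / 2 - L\<^sup>2 * \<alpha>\<^sup>2 * B\<^sup>2 / 2)"
    proof (rule sum_mono)
      fix i assume i: "i \<in> K"
      have pwi: "(norm (gr \<omega>))\<^sup>2 / 2 - L\<^sup>2 * (norm (X \<omega> - v t i \<omega>))\<^sup>2 / 2 \<le> gr \<omega> \<bullet> g i \<omega>" for \<omega>
      proof -
        have "norm (gr \<omega> - g i \<omega>) \<le> L * norm (X \<omega> - v t i \<omega>)"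
          unfolding gr_def g_def by (rule lipschitz_on_normD[OF lip]) auto
        then have "(norm (gr \<omega> - g i \<omega>))\<^sup>2 \<le> (L * norm (X \<omega> - v t i \<omega>))\<^sup>2"
          by (intro power_mono) auto
        then show ?thesis using inner_lb[of "gr \<omega>" "g i \<omega>"] by (simp add: power_mult_distrib)
      qed
      have ei: "integrable M (\<lambda>\<omega>. (norm (X \<omega> - v t i \<omega>))\<^sup>2)" using el[OF i] by (simp add: l2_def)
      have gri: "integrable M (\<lambda>\<omega>. (norm (gr \<omega>))\<^sup>2)" using grl by (simp add: l2_def)
      have "Egr / 2 - L\<^sup>2 * \<alpha>\<^sup>2 * B\<^sup>2 / 2 \<le> Egr / 2 - L\<^sup>2 * (\<integral>\<omega>. (norm (X \<omega> - v t i \<omega>))\<^sup>2 \<partial>M) / 2"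
        using conjunct2[OF el[OF i]] mult_left_mono[of "(\<integral>\<omega>. (norm (X \<omega> - v t i \<omega>))\<^sup>2 \<partial>M)" "\<alpha>\<^sup>2 * B\<^sup>2" "L\<^sup>2"]
        by simp
      also have "\<dots> = (\<integral>\<omega>. (norm (gr \<omega>))\<^sup>2 / 2 - L\<^sup>2 * (norm (X \<omega> - v t i \<omega>))\<^sup>2 / 2 \<partial>M)"
        unfolding Egr_def using ei gri by simp
      also have "\<dots> \<le> (\<integral>\<omega>. gr \<omega> \<bullet> g i \<omega> \<partial>M)"
        by (rule integral_mono) (use ei gri pwi l2_inner_int[OF grl gl[OF i]] in auto)
      finally show "Egr / 2 - L\<^sup>2 * \<alpha>\<^sup>2 * B\<^sup>2 / 2 \<le> (\<integral>\<omega>. gr \<omega> \<bullet> g i \<omega> \<partial>M)" .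
    qed
    finally show ?thesis unfolding k_def by simp
  qed
  have SD_Sg: "S \<omega> = SD \<omega> + Sg \<omega>" for \<omega>
    unfolding S_def SD_def Sg_def D_def by (simp add: sum.distrib[symmetric])
  have Q_eq: "(\<integral>\<omega>. (norm (S \<omega>))\<^sup>2 \<partial>M) = (\<integral>\<omega>. (norm (SD \<omega>))\<^sup>2 \<partial>M) + 2 * (\<integral>\<omega>. SD \<omega> \<bullet> Sg \<omega> \<partial>M) + (\<integral>\<omega>. (norm (Sg \<omega>))\<^sup>2 \<partial>M)"
  proof -
    have "(norm (S \<omega>))\<^sup>2 = (norm (SD \<omega>))\<^sup>2 + 2 * (SD \<omega> \<bullet> Sg \<omega>) + (norm (Sg \<omega>))\<^sup>2" for \<omega>
      unfolding SD_Sg by (simp add: power2_norm_eq_inner inner_add_left inner_add_right inner_commute)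
    then have "(\<integral>\<omega>. (norm (S \<omega>))\<^sup>2 \<partial>M) = (\<integral>\<omega>. (norm (SD \<omega>))\<^sup>2 + 2 * (SD \<omega> \<bullet> Sg \<omega>) + (norm (Sg \<omega>))\<^sup>2 \<partial>M)"
      by simp
    also have "\<dots> = (\<integral>\<omega>. (norm (SD \<omega>))\<^sup>2 \<partial>M) + 2 * (\<integral>\<omega>. SD \<omega> \<bullet> Sg \<omega> \<partial>M) + (\<integral>\<omega>. (norm (Sg \<omega>))\<^sup>2 \<partial>M)"
      using SDl Sgl l2_inner_int[OF SDl Sgl] by (simp add: l2_def)
    finally show ?thesis .
  qed
  have cross0: "(\<integral>\<omega>. SD \<omega> \<bullet> Sg \<omega> \<partial>M) = 0"
  proof -
    have "(\<integral>\<omega>. SD \<omega> \<bullet> Sg \<omega> \<partial>M) = (\<Sum>i\<in>K. \<integral>\<omega>. Sg \<omega> \<bullet> G t i \<omega> - Sg \<omega> \<bullet> g i \<omega> \<partial>M)"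
      unfolding SD_def inner_sum_left D_def
      by (subst Bochner_Integration.integral_sum)
         (auto intro!: l2_inner_int l2_diff GKl gl Sgl simp: inner_diff_left inner_diff_right inner_commute)
    also have "\<dots> = (\<Sum>i\<in>K. 0)"
    proof (rule sum.cong[OF refl])
      fix i assume i: "i \<in> K"
      have "(\<integral>\<omega>. Sg \<omega> \<bullet> G t i \<omega> - Sg \<omega> \<bullet> g i \<omega> \<partial>M) = (\<integral>\<omega>. Sg \<omega> \<bullet> G t i \<omega> \<partial>M) - (\<integral>\<omega>. Sg \<omega> \<bullet> g i \<omega> \<partial>M)"
        by (rule Bochner_Integration.integral_diff) (auto intro!: l2_inner_int GKl gl Sgl i)
      also have "\<dots> = 0" using unbiased_vec[OF prob filt_sub GKl[OF i] gl[OF i] Sgl SgF unb[OF i]] by simp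
      finally show "(\<integral>\<omega>. Sg \<omega> \<bullet> G t i \<omega> - Sg \<omega> \<bullet> g i \<omega> \<partial>M) = 0" .
    qed
    finally show ?thesis by simp
  qed
  have SDb: "(\<integral>\<omega>. (norm (SD \<omega>))\<^sup>2 \<partial>M) \<le> real k * \<sigma>\<^sup>2"
  proof -
    have "(\<integral>\<omega>. (norm (SD \<omega>))\<^sup>2 \<partial>M) = (\<Sum>i\<in>K. (\<integral>\<omega>. (norm (D i \<omega>))\<^sup>2 \<partial>M))"
      unfolding SD_def
    proof (rule sum_var[OF finK Dl])
      fix i j assume ij: "i \<in> K" "j \<in> K" "i \<noteq> j"
      show "(\<integral>\<omega>. D i \<omega> \<bullet> D j \<omega> \<partial>M) = 0"
        unfolding D_def
      proof (rule cross_zero[OF prob filt_sub GKl[OF ij(1)] gl[OF ij(1)] GKl[OF ij(2)] gl[OF ij(2)]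
            gF[OF ij(1)] gF[OF ij(2)] unb[OF ij(1)] unb[OF ij(2)]])
        fix A B :: "'v set" assume "A \<in> sets borel" "B \<in> sets borel"
        then show "AE \<omega> in M. real_cond_exp M (F t) (\<lambda>\<omega>. indicator A (G t i \<omega>) * indicator B (G t j \<omega>)) \<omega>
         = real_cond_exp M (F t) (\<lambda>\<omega>. indicator A (G t i \<omega>)) \<omega> * real_cond_exp M (F t) (\<lambda>\<omega>. indicator B (G t j \<omega>)) \<omega>"
          using ci2_from[OF prob filt_sub G_indep[of t] _ _ _ ij(3)] finK ij unfolding K_def by blast
      qed
    qed simp
    also have "\<dots> \<le> (\<Sum>i\<in>K. \<sigma>\<^sup>2)"
    proof (rule sum_mono)
      fix i assume i: "i \<in> K"
      interpret sigma_finite_subalgebra M "F t" using sfs_of_prob[OF prob filt_sub] .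
      have di: "integrable M (\<lambda>\<omega>. (norm (D i \<omega>))\<^sup>2)" using Dl[OF i] by (simp add: l2_def)
      have "(\<integral>\<omega>. (norm (D i \<omega>))\<^sup>2 \<partial>M) = (\<integral>\<omega>. real_cond_exp M (F t) (\<lambda>\<omega>. (norm (D i \<omega>))\<^sup>2) \<omega> \<partial>M)"
        using real_cond_exp_int(2)[OF di] by simp
      also have "\<dots> \<le> (\<integral>\<omega>. \<sigma>\<^sup>2 \<partial>M)"
      proof (rule integral_mono_AE)
        show "integrable M (real_cond_exp M (F t) (\<lambda>\<omega>. (norm (D i \<omega>))\<^sup>2))" using real_cond_exp_int(1)[OF di] .
        show "AE \<omega> in M. real_cond_exp M (F t) (\<lambda>\<omega>. (norm (D i \<omega>))\<^sup>2) \<omega> \<le> \<sigma>\<^sup>2"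
          using G_var[of i t] i unfolding D_def g_def K_def by simp
      qed simp
      also have "\<dots> = \<sigma>\<^sup>2" by (simp add: prob_space.prob_space[OF prob])
      finally show "(\<integral>\<omega>. (norm (D i \<omega>))\<^sup>2 \<partial>M) \<le> \<sigma>\<^sup>2" .
    qed
    finally show ?thesis unfolding k_def by simp
  qed
  have Sgb: "(\<integral>\<omega>. (norm (Sg \<omega>))\<^sup>2 \<partial>M) \<le> 2 * (real k)\<^sup>2 * Egr + 2 * (real k)\<^sup>2 * L\<^sup>2 * \<alpha>\<^sup>2 * B\<^sup>2"
  proof -
    have ei: "integrable M (\<lambda>\<omega>. (norm (X \<omega> - v t i \<omega>))\<^sup>2)" if "i \<in> K" for i using el[OF that] by (simp add: l2_def)
    have gri: "integrable M (\<lambda>\<omega>. (norm (gr \<omega>))\<^sup>2)" using grl by (simp add: l2_def)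
    have pwb: "(norm (Sg \<omega>))\<^sup>2 \<le> real k * (\<Sum>i\<in>K. 2 * (norm (gr \<omega>))\<^sup>2 + 2 * L\<^sup>2 * (norm (X \<omega> - v t i \<omega>))\<^sup>2)" for \<omega>
    proof -
      have "(norm (Sg \<omega>))\<^sup>2 \<le> (\<Sum>i\<in>K. norm (g i \<omega>))\<^sup>2"
        unfolding Sg_def by (intro power_mono norm_sum) simp
      also have "\<dots> \<le> (\<Sum>i\<in>K. (norm (g i \<omega>))\<^sup>2) * real k"
        unfolding k_def by (rule sum_squared_le_sum_of_squares)
      also have "\<dots> \<le> (\<Sum>i\<in>K. 2 * (norm (gr \<omega>))\<^sup>2 + 2 * L\<^sup>2 * (norm (X \<omega> - v t i \<omega>))\<^sup>2) * real k"
      proof (rule mult_right_mono[OF sum_mono])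
        fix i assume i: "i \<in> K"
        have "norm (g i \<omega> - gr \<omega>) \<le> L * norm (v t i \<omega> - X \<omega>)"
          unfolding gr_def g_def by (rule lipschitz_on_normD[OF lip]) auto
        then have "(norm (g i \<omega> - gr \<omega>))\<^sup>2 \<le> (L * norm (X \<omega> - v t i \<omega>))\<^sup>2"
          by (intro power_mono) (auto simp: norm_minus_commute)
        moreover have "(norm (g i \<omega>))\<^sup>2 \<le> 2 * (norm (gr \<omega>))\<^sup>2 + 2 * (norm (g i \<omega> - gr \<omega>))\<^sup>2"
          using norm_add_sq_le[of "gr \<omega>" "g i \<omega> - gr \<omega>"] by simp
        ultimately show "(norm (g i \<omega>))\<^sup>2 \<le> 2 * (norm (gr \<omega>))\<^sup>2 + 2 * L\<^sup>2 * (norm (X \<omega> - v t i \<omega>))\<^sup>2"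
          by (simp add: power_mult_distrib)
      qed simp
      finally show ?thesis by (simp add: mult.commute)
    qed
    have "(\<integral>\<omega>. (norm (Sg \<omega>))\<^sup>2 \<partial>M) \<le> (\<integral>\<omega>. real k * (\<Sum>i\<in>K. 2 * (norm (gr \<omega>))\<^sup>2 + 2 * L\<^sup>2 * (norm (X \<omega> - v t i \<omega>))\<^sup>2) \<partial>M)"
      by (rule integral_mono) (use Sgl pwb ei gri in \<open>auto simp: l2_def\<close>)
    also have "\<dots> = real k * (\<Sum>i\<in>K. 2 * Egr + 2 * L\<^sup>2 * (\<integral>\<omega>. (norm (X \<omega> - v t i \<omega>))\<^sup>2 \<partial>M))"
    proof -
      have "(\<integral>\<omega>. (\<Sum>i\<in>K. 2 * (norm (gr \<omega>))\<^sup>2 + 2 * L\<^sup>2 * (norm (X \<omega> - v t i \<omega>))\<^sup>2) \<partial>M)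
          = (\<Sum>i\<in>K. \<integral>\<omega>. 2 * (norm (gr \<omega>))\<^sup>2 + 2 * L\<^sup>2 * (norm (X \<omega> - v t i \<omega>))\<^sup>2 \<partial>M)"
        by (rule Bochner_Integration.integral_sum) (use ei gri in auto)
      also have "\<dots> = (\<Sum>i\<in>K. 2 * Egr + 2 * L\<^sup>2 * (\<integral>\<omega>. (norm (X \<omega> - v t i \<omega>))\<^sup>2 \<partial>M))"
        by (intro sum.cong refl) (use ei gri in \<open>simp add: Egr_def\<close>)
      finally show ?thesis by simp
    qed
    also have "\<dots> \<le> real k * (\<Sum>i\<in>K. 2 * Egr + 2 * L\<^sup>2 * (\<alpha>\<^sup>2 * B\<^sup>2))"
      by (intro mult_left_mono sum_mono add_left_mono mult_left_mono conjunct2[OF el]) auto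
    also have "\<dots> = 2 * (real k)\<^sup>2 * Egr + 2 * (real k)\<^sup>2 * L\<^sup>2 * \<alpha>\<^sup>2 * B\<^sup>2"
      unfolding k_def by (simp add: power2_eq_square algebra_simps)
    finally show ?thesis .
  qed
  have Qb: "(\<integral>\<omega>. (norm (S \<omega>))\<^sup>2 \<partial>M) \<le> real k * \<sigma>\<^sup>2 + 2 * (real k)\<^sup>2 * Egr + 2 * (real k)\<^sup>2 * L\<^sup>2 * \<alpha>\<^sup>2 * B\<^sup>2"
    using Q_eq cross0 SDb Sgb by simp
  have res: "(\<integral>\<omega>. f (x (Suc t) \<omega>) \<partial>M) \<le> (\<integral>\<omega>. f (X \<omega>) \<partial>M) - \<alpha> / 8 * Egr + \<alpha>^3 * B\<^sup>2 * L\<^sup>2 / 2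
      + L * \<alpha>\<^sup>2 * \<sigma>\<^sup>2 / real p + 2 * L^3 * \<alpha>^4 * B\<^sup>2"
    by (rule final_arith[OF alpha_pos Lpos La pp kge kp Egr0 _ _ main Tb Qb]) simp_all
  then show ?thesis unfolding Egr_eq X_def .
qed

end
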